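(* Let $F,G$ be Fourier matrices of the same size $N$ with indexing groups $I_F,I_G$. Then (a) $\mathrm{Stab}(F)=\{(P_\rho,P_{(h^{FF}_\rho)^{-1}}):\ \rho\in\mathrm{Aut}(I_F)\}=\{(P_{(h^{FF}_\rho)^{-1}},P_\rho):\ \rho\in\mathrm{Aut}(I_F)\}$; (b) $\mathrm{Map}(F,G)=\{(P_\chi,P_{(h^{FG}_\chi)^{-1}}):\ \chi\in\mathrm{Iso}(I_G,I_F)\}=\{(P_{(h^{FG}_\chi)^{-1}},P_\chi):\ \chi\in\mathrm{Iso}(I_G,I_F)\}$, where $\mathrm{Stab}(F)$ is the set of pairs $(P,R)$ of $N\times N$ permutation matrices with $PFR^{-1}=F$ and $\mathrm{Map}(F,G)$ is the set of such pairs with $PFR^{-1}=G$.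
   Context: For $n\ge1$, $F_n$ is the $n\times n$ matrix with rows and columns indexed by $\mathbb Z_n$ and entries $e^{2\pi i\,\tilde i\tilde j/n}$. A Fourier matrix is $F=F_{N_1}\otimes\cdots\otimes F_{N_r}$ of size $N=N_1\cdots N_r$, indexed by $I_F=\mathbb Z_{N_1}\times\cdots\times\mathbb Z_{N_r}$ with $F_{i,j}=\prod_x(F_{N_x})_{i_x,j_x}$; group indices correspond to ordinary indices via lexicographic order. For a bijection $\varphi:I_G\to I_F$, $P_\varphi$ is the permutation matrix (rows indexed by $I_G$, columns by $I_F$) with $(P_\varphi)_{i,\varphi(i)}=1$. $\mathrm{Iso}(I_G,I_F)$ is the set of group isomorphisms $I_G\to I_F$ and $\mathrm{Aut}(I_F)=\mathrm{Iso}(I_F,I_F)$. For an isomorphism $\chi:I_G\to I_F$, $h^{FG}_\chi:I_F\to I_G$ is the unique bijection with $F_{\chi(i),j}=G_{i,h^{FG}_\chi(j)}$ for all $i\in I_G$, $j\in I_F$ (it is an isomorphism). *)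

theory Defs
  imports "Jordan_Normal_Form.Gauss_Jordan_Elimination" "HOL-Algebra.Group"
begin

definition Zcarrier :: "nat list \<Rightarrow> nat list set" where
  "Zcarrier ns = {xs. length xs = length ns \<and> (\<forall>k<length ns. xs ! k < ns ! k)}"

definition Zgrp :: "nat list \<Rightarrow> nat list monoid" where
  "Zgrp ns = \<lparr> carrier = Zcarrier ns,
              mult = (\<lambda>xs ys. map (\<lambda>k. (xs ! k + ys ! k) mod ns ! k) [0..<length ns]),
              one = replicate (length ns) 0 \<rparr>"

(* lexicographic correspondence group index -> ordinary index in {0..<N} *)
definition lex_idx :: "nat list \<Rightarrow> nat list \<Rightarrow> nat" where
  "lex_idx ns xs = foldl (\<lambda>acc (n, x). acc * n + x) 0 (zip ns xs)"

definition unlex :: "nat list \<Rightarrow> nat \<Rightarrow> nat list" where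
  "unlex ns = inv_into (Zcarrier ns) (lex_idx ns)"

(* group-indexed entries of F = F_{n_1} \<otimes> ... \<otimes> F_{n_r} *)
definition fourier_entry :: "nat list \<Rightarrow> nat list \<Rightarrow> nat list \<Rightarrow> complex" where
  "fourier_entry ns i j =
     (\<Prod>x<length ns. exp (2 * complex_of_real pi * \<i> * of_nat (i ! x * j ! x) / of_nat (ns ! x)))"

definition fourier_mat :: "nat list \<Rightarrow> complex mat" where
  "fourier_mat ns = mat (prod_list ns) (prod_list ns)
      (\<lambda>(a, b). fourier_entry ns (unlex ns a) (unlex ns b))"

(* P_phi for phi : I_G -> I_F (G indexed by ms, F by ns): (P_phi)_{i, phi i} = 1 *)
definition perm_mat_of :: "nat list \<Rightarrow> nat list \<Rightarrow> (nat list \<Rightarrow> nat list) \<Rightarrow> complex mat" where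
  "perm_mat_of ms ns \<phi> = mat (prod_list ms) (prod_list ns)
      (\<lambda>(a, b). if lex_idx ns (\<phi> (unlex ms a)) = b then 1 else 0)"

definition hFG :: "nat list \<Rightarrow> nat list \<Rightarrow> (nat list \<Rightarrow> nat list) \<Rightarrow> (nat list \<Rightarrow> nat list)" where
  "hFG ns ms \<chi> = (THE h. h \<in> extensional (Zcarrier ns) \<and> bij_betw h (Zcarrier ns) (Zcarrier ms) \<and>
      (\<forall>i\<in>Zcarrier ms. \<forall>j\<in>Zcarrier ns. fourier_entry ns (\<chi> i) j = fourier_entry ms i (h j)))"

definition is_perm_mat :: "nat \<Rightarrow> complex mat \<Rightarrow> bool" where
  "is_perm_mat N P \<longleftrightarrow> (\<exists>\<sigma>. \<sigma> permutes {0..<N} \<and>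
      P = mat N N (\<lambda>(i, j). if \<sigma> i = j then 1 else 0))"

definition Map_set :: "nat \<Rightarrow> complex mat \<Rightarrow> complex mat \<Rightarrow> (complex mat \<times> complex mat) set" where
  "Map_set N F G = {(P, R). is_perm_mat N P \<and> is_perm_mat N R \<and>
      (\<exists>Ri. mat_inverse R = Some Ri \<and> P * F * Ri = G)}"

definition Stab_set :: "nat \<Rightarrow> complex mat \<Rightarrow> (complex mat \<times> complex mat) set" where
  "Stab_set N F = {(P, R). is_perm_mat N P \<and> is_perm_mat N R \<and>
      (\<exists>Ri. mat_inverse R = Some Ri \<and> P * F * Ri = F)}"

end

theory Submission
  imports Defs
begin


lemma foldl_lex:
  "length xs = length (ns::nat list) \<Longrightarrow> foldl (\<lambda>acc (n, x). acc * n + x) a (zip ns xs)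
     = a * prod_list ns + foldl (\<lambda>acc (n, x). acc * n + x) 0 (zip ns xs)"
proof (induction ns arbitrary: xs a)
  case Nil then show ?case by simp
next
  case (Cons n ns)
  then obtain x xs' where xs: "xs = x # xs'" "length xs' = length ns" by (cases xs) auto
  show ?case using Cons.IH[OF xs(2), of "a*n+x"] Cons.IH[OF xs(2), of "x"] xs
    by (simp add: algebra_simps)
qed

lemma lex_Cons: "length xs = length ns \<Longrightarrow> lex_idx (n#ns) (x#xs) = x * prod_list ns + lex_idx ns xs"
  unfolding lex_idx_def using foldl_lex[of xs ns x] by simp

lemma Zcarrier_Nil: "Zcarrier [] = {[]}" by (auto simp: Zcarrier_def)

lemma Zcarrier_Cons: "Zcarrier (n#ns) = {x#xs | x xs. x < n \<and> xs \<in> Zcarrier ns}"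
  apply (auto simp: Zcarrier_def)
  subgoal for xs by (cases xs) (auto simp: nth_Cons split: nat.splits)
  subgoal for x xs k by (cases k) auto
  done

lemma lex_bij: "bij_betw (lex_idx ns) (Zcarrier ns) {0..<prod_list ns}"
proof (induction ns)
  case Nil then show ?case by (simp add: Zcarrier_Nil lex_idx_def bij_betw_def)
next
  case (Cons n ns)
  let ?P = "prod_list ns"
  have len: "xs \<in> Zcarrier ns \<Longrightarrow> length xs = length ns" for xs by (simp add: Zcarrier_def)
  have lt: "xs \<in> Zcarrier ns \<Longrightarrow> lex_idx ns xs < ?P" for xs
    using Cons.IH by (auto simp: bij_betw_def)
  show ?case unfolding bij_betw_def
  proof
    show "inj_on (lex_idx (n # ns)) (Zcarrier (n # ns))"
    proof (rule inj_onI)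
      fix a b assume a: "a \<in> Zcarrier (n#ns)" and b: "b \<in> Zcarrier (n#ns)"
        and eq: "lex_idx (n # ns) a = lex_idx (n # ns) b"
      from a obtain x xs where ax: "a = x#xs" "x < n" "xs \<in> Zcarrier ns" by (auto simp: Zcarrier_Cons)
      from b obtain y ys where bb: "b = y#ys" "y < n" "ys \<in> Zcarrier ns" by (auto simp: Zcarrier_Cons)
      have e: "x * ?P + lex_idx ns xs = y * ?P + lex_idx ns ys"
        using eq ax bb len lex_Cons by metis
      have l1: "lex_idx ns xs < ?P" "lex_idx ns ys < ?P" using lt ax bb by auto
      have "(x * ?P + lex_idx ns xs) div ?P = x" "(y * ?P + lex_idx ns ys) div ?P = y"
        using l1 by auto
      then have "x = y" using e by metis
      then have "lex_idx ns xs = lex_idx ns ys" using e by simp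
      then have "xs = ys" using Cons.IH ax bb by (auto simp: bij_betw_def inj_on_def)
      then show "a = b" using ax bb \<open>x = y\<close> by simp
    qed
    show "lex_idx (n # ns) ` Zcarrier (n # ns) = {0..<prod_list (n # ns)}"
    proof
      show "lex_idx (n # ns) ` Zcarrier (n # ns) \<subseteq> {0..<prod_list (n # ns)}"
      proof
        fix v assume "v \<in> lex_idx (n # ns) ` Zcarrier (n # ns)"
        then obtain x xs where v: "v = lex_idx (n#ns) (x#xs)" "x < n" "xs \<in> Zcarrier ns"
          by (auto simp: Zcarrier_Cons)
        have "v = x * ?P + lex_idx ns xs" using v len lex_Cons by metis
        also have "\<dots> < x * ?P + ?P" using lt v by simp
        also have "\<dots> = (x+1) * ?P" by simp
        also have "\<dots> \<le> n * ?P" using v(2) by (intro mult_right_mono) auto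
        finally show "v \<in> {0..<prod_list (n # ns)}" by simp
      qed
      show "{0..<prod_list (n # ns)} \<subseteq> lex_idx (n # ns) ` Zcarrier (n # ns)"
      proof
        fix v assume "v \<in> {0..<prod_list (n # ns)}"
        then have v: "v < n * ?P" by simp
        then have P: "?P > 0" by (cases "?P = 0") auto
        have "v mod ?P \<in> {0..<?P}" using P by simp
        then obtain xs where xs: "xs \<in> Zcarrier ns" "lex_idx ns xs = v mod ?P"
          using Cons.IH by (metis bij_betw_def imageE)
        have "v div ?P < n" using v P by (simp add: div_less_iff_less_mult)
        moreover have "lex_idx (n#ns) (v div ?P # xs) = v"
          using lex_Cons[OF len[OF xs(1)]] xs(2) by simp
        ultimately show "v \<in> lex_idx (n # ns) ` Zcarrier (n # ns)"
          using xs(1) by (force simp: Zcarrier_Cons)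
      qed
    qed
  qed
qed




definition zm :: "nat list \<Rightarrow> nat list \<Rightarrow> nat list \<Rightarrow> nat list" where
  "zm ns a b = map (\<lambda>k. (a ! k + b ! k) mod ns ! k) [0..<length ns]"

lemma Zgrp_mult: "a \<otimes>\<^bsub>Zgrp ns\<^esub> b = zm ns a b" by (simp add: Zgrp_def zm_def)
lemma Zgrp_carrier: "carrier (Zgrp ns) = Zcarrier ns" by (simp add: Zgrp_def)

definition ee :: "nat \<Rightarrow> nat \<Rightarrow> complex" where
  "ee m a = exp (2 * complex_of_real pi * \<i> * of_nat a / of_nat m)"

lemma fe_ee: "fourier_entry ns i j = (\<Prod>x<length ns. ee (ns!x) (i!x * j!x))"
  by (simp add: fourier_entry_def ee_def)

lemma ee_cis: "ee m a = cis (2 * pi * real a / real m)"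
  unfolding ee_def cis_conv_exp by (simp add: mult_ac)

lemma ee_mod: "0 < m \<Longrightarrow> ee m (a mod m) = ee m a"
proof -
  assume m: "0 < m"
  have a: "a = (a div m) * m + a mod m" by simp
  have na: "complex_of_nat a = of_nat (a div m) * of_nat m + of_nat (a mod m)"
    by (metis a of_nat_add of_nat_mult)
  have "2 * complex_of_real pi * \<i> * of_nat a / of_nat m
      = of_nat (a div m) * (2 * complex_of_real pi * \<i>) + 2 * complex_of_real pi * \<i> * of_nat (a mod m) / of_nat m"
    unfolding na using m by (simp add: field_simps)
  then have "ee m a = exp (of_nat (a div m) * (2 * complex_of_real pi * \<i>)) * ee m (a mod m)"
    unfolding ee_def by (simp add: exp_add)
  also have "exp (of_nat (a div m) * (2 * complex_of_real pi * \<i>)) = 1"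
    unfolding exp_of_nat_mult by simp
  finally show ?thesis by simp
qed

lemma ee_add: "ee m (a + b) = ee m a * ee m b"
  unfolding ee_def by (simp add: exp_add[symmetric] add_divide_distrib distrib_left)

lemma ee_mult: "ee m (a * b) = ee m b ^ a"
  unfolding ee_def by (simp add: exp_of_nat_mult[symmetric] mult_ac)

lemma ee_inj: "a < m \<Longrightarrow> b < m \<Longrightarrow> ee m a = ee m b \<Longrightarrow> a = b"
  using bij_betw_roots_unity[of m] unfolding ee_cis bij_betw_def inj_on_def by auto

lemma ee_roots: "0 < m \<Longrightarrow> z ^ m = 1 \<Longrightarrow> \<exists>j<m. z = ee m (j::nat)"
  using bij_betw_roots_unity[of m] unfolding ee_cis bij_betw_def by (auto simp: image_iff)

lemma ee_nz: "ee m a \<noteq> 0" by (simp add: ee_def)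

lemma fe_nz: "fourier_entry ns i j \<noteq> 0" by (simp add: fe_ee ee_nz)

lemma fe_sym: "fourier_entry ns i j = fourier_entry ns j i" by (simp add: fe_ee mult.commute)

definition pos :: "nat list \<Rightarrow> bool" where "pos ns = (\<forall>k<length ns. 0 < ns ! k)"

lemma zm_closed: "pos ns \<Longrightarrow> zm ns a b \<in> Zcarrier ns"
  by (auto simp: Zcarrier_def zm_def pos_def)

lemma fe_mult:
  assumes "pos ns" 
  shows "fourier_entry ns (zm ns a b) k = fourier_entry ns a k * fourier_entry ns b k"
proof -
  have "ee (ns!x) ((zm ns a b)!x * k!x) = ee (ns!x) (a!x * k!x) * ee (ns!x) (b!x * k!x)"
    if "x < length ns" for x
  proof -
    have "ee (ns!x) ((zm ns a b)!x * k!x) = ee (ns!x) (((a!x + b!x) mod ns!x) * k!x)"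
      using that by (simp add: zm_def)
    also have "\<dots> = ee (ns!x) ((a!x + b!x) * k!x)"
    proof -
      have m: "0 < ns!x" using assms that by (simp add: pos_def)
      have "ee (ns!x) (((a!x + b!x) mod ns!x) * k!x) = ee (ns!x) ((((a!x + b!x) mod ns!x) * k!x) mod ns!x)"
        using ee_mod[OF m] by metis
      also have "\<dots> = ee (ns!x) (((a!x + b!x) * k!x) mod ns!x)" by (metis mod_mult_left_eq)
      also have "\<dots> = ee (ns!x) ((a!x + b!x) * k!x)" using ee_mod[OF m] by metis
      finally show ?thesis .
    qed
    also have "\<dots> = ee (ns!x) (a!x * k!x) * ee (ns!x) (b!x * k!x)"
      by (simp add: add_mult_distrib ee_add)
    finally show ?thesis .
  qed
  then show ?thesis by (simp add: fe_ee prod.distrib[symmetric])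
qed

definition unitv :: "nat list \<Rightarrow> nat \<Rightarrow> nat \<Rightarrow> nat list" where
  "unitv ns x c = map (\<lambda>y. if y = x then c else 0) [0..<length ns]"

lemma fe_unitv:
  assumes "x < length ns" "length i = length ns"
  shows "fourier_entry ns i (unitv ns x c) = ee (ns!x) (i!x * c)"
proof -
  have "fourier_entry ns i (unitv ns x c) = (\<Prod>y<length ns. if y = x then ee (ns!x) (i!x * c) else 1)"
    unfolding fe_ee by (rule prod.cong) (auto simp: unitv_def ee_def)
  also have "\<dots> = ee (ns!x) (i!x * c)" using assms by (simp add: prod.delta)
  finally show ?thesis .
qed

lemma unitv_in: "x < length ns \<Longrightarrow> c < ns!x \<Longrightarrow> pos ns \<Longrightarrow> unitv ns x c \<in> Zcarrier ns"
  by (auto simp: unitv_def Zcarrier_def pos_def)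

lemma fe_nondeg:
  assumes "pos ns" "i \<in> Zcarrier ns" "i' \<in> Zcarrier ns"
    and eq: "\<forall>k\<in>Zcarrier ns. fourier_entry ns i k = fourier_entry ns i' k"
  shows "i = i'"
proof (rule nth_equalityI)
  show "length i = length i'" using assms by (simp add: Zcarrier_def)
  fix x assume "x < length i"
  then have x: "x < length ns" using assms by (simp add: Zcarrier_def)
  have lt: "i!x < ns!x" "i'!x < ns!x" using assms x by (auto simp: Zcarrier_def)
  show "i!x = i'!x"
  proof (cases "ns!x = 1")
    case True then show ?thesis using lt by simp
  next
    case False
    then have "1 < ns!x" using lt by simp
    then have "unitv ns x 1 \<in> Zcarrier ns" using unitv_in x assms by simp
    then have "ee (ns!x) (i!x) = ee (ns!x) (i'!x)"
      using eq fe_unitv[OF x, of i 1] fe_unitv[OF x, of i' 1] assms by (simp add: Zcarrier_def)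
    then show ?thesis using ee_inj lt by blast
  qed
qed

definition trunc :: "nat list \<Rightarrow> nat \<Rightarrow> nat list \<Rightarrow> nat list" where
  "trunc ns t i = map (\<lambda>y. if y < t then i!y else 0) [0..<length ns]"

lemma char_surj:
  assumes P: "pos ns"
    and hom: "\<And>a b. a \<in> Zcarrier ns \<Longrightarrow> b \<in> Zcarrier ns \<Longrightarrow> \<phi> (zm ns a b) = \<phi> a * \<phi> b"
    and nz: "\<And>a. a \<in> Zcarrier ns \<Longrightarrow> \<phi> a \<noteq> 0"
  shows "\<exists>k\<in>Zcarrier ns. \<forall>i\<in>Zcarrier ns. \<phi> i = fourier_entry ns i k"
proof -
  define z where "z = replicate (length ns) (0::nat)"
  have zin: "z \<in> Zcarrier ns" using P by (auto simp: z_def Zcarrier_def pos_def)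
  have "zm ns z z = z" by (auto simp: zm_def z_def intro!: nth_equalityI)
  then have "\<phi> z = \<phi> z * \<phi> z" using hom[OF zin zin] by simp
  then have phz: "\<phi> z = 1" using nz[OF zin] by simp
  have "\<exists>kx<ns!x. \<forall>c<ns!x. \<phi> (unitv ns x c) = ee (ns!x) kx ^ c" if x: "x < length ns" for x
  proof (cases "ns!x = 1")
    case True
    have "unitv ns x 0 = z" by (simp add: unitv_def z_def map_replicate_const)
    then show ?thesis using True phz by auto
  next
    case False
    then have m: "1 < ns!x" using P x by (simp add: pos_def) (metis One_nat_def Suc_lessI)
    define w where "w = \<phi> (unitv ns x 1)"
    have u1: "unitv ns x 1 \<in> Zcarrier ns" using unitv_in x m P by simp
    have pw: "\<phi> (unitv ns x c) = w ^ c" if "c < ns!x" for c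
      using that
    proof (induction c)
      case 0
      have "unitv ns x 0 = z" by (simp add: unitv_def z_def map_replicate_const)
      then show ?case using phz by simp
    next
      case (Suc c)
      have "zm ns (unitv ns x c) (unitv ns x 1) = unitv ns x (Suc c)"
        using Suc.prems by (auto simp: zm_def unitv_def)
      then show ?case using hom[OF unitv_in[OF x _ P] u1, of c] Suc by (simp add: w_def)
    qed
    have "zm ns (unitv ns x (ns!x - 1)) (unitv ns x 1) = z"
      using m by (auto simp: zm_def unitv_def z_def intro!: nth_equalityI)
    then have "w ^ (ns!x - 1) * w = 1"
      using hom[OF unitv_in[OF x _ P] u1, of "ns!x - 1"] pw[of "ns!x - 1"] m phz by (simp add: w_def)
    moreover have "ns!x = Suc (ns!x - 1)" using m by simp
    ultimately have "w ^ (ns!x) = 1" by (metis power_Suc2)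
    then obtain j where j: "j < ns!x" "w = ee (ns!x) j"
      using ee_roots[of "ns!x" w] m by auto
    show ?thesis using j pw by (intro exI[of _ j]) auto
  qed
  then have "\<forall>x. \<exists>kx. x < length ns \<longrightarrow> kx < ns!x \<and> (\<forall>c<ns!x. \<phi> (unitv ns x c) = ee (ns!x) kx ^ c)"
    by blast
  from choice[OF this] obtain kf where kf: "\<And>x. x < length ns \<Longrightarrow> kf x < ns!x \<and> (\<forall>c<ns!x. \<phi> (unitv ns x c) = ee (ns!x) (kf x) ^ c)"
    by blast
  define k where "k = map kf [0..<length ns]"
  have kin: "k \<in> Zcarrier ns" using kf by (simp add: k_def Zcarrier_def)
  have tr: "\<phi> (trunc ns t i) = (\<Prod>y<t. ee (ns!y) (kf y) ^ (i!y))"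
    if i: "i \<in> Zcarrier ns" and t: "t \<le> length ns" for i t
    using t
  proof (induction t)
    case 0
    have "trunc ns 0 i = z" by (simp add: trunc_def z_def map_replicate_const)
    then show ?case using phz by simp
  next
    case (Suc t)
    have tl: "t < length ns" using Suc by simp
    have it: "i!t < ns!t" using i tl by (simp add: Zcarrier_def)
    have trin: "trunc ns t i \<in> Zcarrier ns" using i P by (auto simp: trunc_def Zcarrier_def pos_def)
    have "zm ns (trunc ns t i) (unitv ns t (i!t)) = trunc ns (Suc t) i"
      using i by (auto simp: zm_def trunc_def unitv_def Zcarrier_def intro!: nth_equalityI)
    then have "\<phi> (trunc ns (Suc t) i) = \<phi> (trunc ns t i) * \<phi> (unitv ns t (i!t))"
      using hom[OF trin unitv_in[OF tl it P]] by simp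
    then show ?case using Suc kf[OF tl] it by simp
  qed
  show ?thesis
  proof (intro bexI[OF _ kin] ballI)
    fix i assume i: "i \<in> Zcarrier ns"
    have "trunc ns (length ns) i = i" using i by (auto simp: trunc_def Zcarrier_def intro!: nth_equalityI)
    then have "\<phi> i = (\<Prod>y<length ns. ee (ns!y) (kf y) ^ (i!y))" using tr[OF i, of "length ns"] by simp
    also have "\<dots> = fourier_entry ns i k"
      unfolding fe_ee by (rule prod.cong) (auto simp: k_def ee_mult)
    finally show "\<phi> i = fourier_entry ns i k" .
  qed
qed




definition pmat :: "nat \<Rightarrow> (nat \<Rightarrow> nat) \<Rightarrow> complex mat" where
  "pmat N f = Matrix.mat N N (\<lambda>(i,j). if f i = j then 1 else 0)"

lemma pm_left:
  assumes f: "\<forall>i<N. f i < N" and M: "M \<in> carrier_mat N n"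
  shows "pmat N f * M = Matrix.mat N n (\<lambda>(i,j). M $$ (f i, j))"
proof (rule eq_matI)
  fix i j assume i: "i < dim_row (Matrix.mat N n (\<lambda>(i,j). M $$ (f i, j)))" and j: "j < dim_col (Matrix.mat N n (\<lambda>(i,j). M $$ (f i, j)))"
  then have i': "i < N" and j': "j < n" by auto
  have "(pmat N f * M) $$ (i,j) = (\<Sum>d\<in>{0..<N}. (if f i = d then 1 else 0) * M $$ (d, j))"
    using i' j' M by (simp add: pmat_def scalar_prod_def)
  also have "\<dots> = (\<Sum>d\<in>{0..<N}. if f i = d then M $$ (d, j) else 0)"
    by (rule sum.cong) auto
  also have "\<dots> = M $$ (f i, j)" using f i' by (simp add: sum.delta)
  finally show "(pmat N f * M) $$ (i,j) = Matrix.mat N n (\<lambda>(i,j). M $$ (f i, j)) $$ (i,j)"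
    using i' j' by simp
qed (use M in \<open>auto simp: pmat_def\<close>)

lemma pm_right:
  assumes f: "\<forall>i<N. f i < N" and M: "M \<in> carrier_mat n N"
  shows "M * transpose_mat (pmat N f) = Matrix.mat n N (\<lambda>(i,j). M $$ (i, f j))"
proof (rule eq_matI)
  fix i j assume i: "i < dim_row (Matrix.mat n N (\<lambda>(i,j). M $$ (i, f j)))" and j: "j < dim_col (Matrix.mat n N (\<lambda>(i,j). M $$ (i, f j)))"
  then have i': "i < n" and j': "j < N" by auto
  have "(M * transpose_mat (pmat N f)) $$ (i,j) = (\<Sum>d\<in>{0..<N}. M $$ (i, d) * (if f j = d then 1 else 0))"
    using i' j' M by (simp add: pmat_def scalar_prod_def)
  also have "\<dots> = (\<Sum>d\<in>{0..<N}. if f j = d then M $$ (i, d) else 0)"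
    by (rule sum.cong) auto
  also have "\<dots> = M $$ (i, f j)" using f j' by (simp add: sum.delta)
  finally show "(M * transpose_mat (pmat N f)) $$ (i,j) = Matrix.mat n N (\<lambda>(i,j). M $$ (i, f j)) $$ (i,j)"
    using i' j' by simp
qed (use M in \<open>auto simp: pmat_def\<close>)

lemma pm_carrier: "pmat N f \<in> carrier_mat N N" by (simp add: pmat_def)

lemma pm_AT:
  assumes f: "\<forall>i<N. f i < N" and inj: "inj_on f {0..<N}"
  shows "pmat N f * transpose_mat (pmat N f) = 1\<^sub>m N"
proof -
  have "pmat N f * transpose_mat (pmat N f) = Matrix.mat N N (\<lambda>(i,j). pmat N f $$ (i, f j))"
    by (rule pm_right[OF f pm_carrier])
  also have "\<dots> = 1\<^sub>m N"
    using f inj by (intro eq_matI) (auto simp: pmat_def inj_on_def)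
  finally show ?thesis .
qed

lemma pm_transpose:
  assumes b: "bij_betw f {0..<N} {0..<N}"
  shows "transpose_mat (pmat N f) = pmat N (inv_into {0..<N} f)"
proof (rule eq_matI)
  fix i j assume "i < dim_row (pmat N (inv_into {0..<N} f))" "j < dim_col (pmat N (inv_into {0..<N} f))"
  then have ij: "i < N" "j < N" by (auto simp: pmat_def)
  have "(f j = i) = (inv_into {0..<N} f i = j)"
    using b ij by (metis atLeastLessThan_iff bij_betw_inv_into_left bij_betw_inv_into_right zero_le)
  then show "transpose_mat (pmat N f) $$ (i, j) = pmat N (inv_into {0..<N} f) $$ (i, j)"
    using ij by (simp add: pmat_def)
qed (auto simp: pmat_def)

lemma pm_inv:
  assumes b: "bij_betw f {0..<N} {0..<N}"
  shows "mat_inverse (pmat N f) = Some (transpose_mat (pmat N f))"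
proof -
  let ?A = "pmat N f" and ?T = "transpose_mat (pmat N f)"
  have f: "\<forall>i<N. f i < N" using b by (auto simp: bij_betw_def)
  have inj: "inj_on f {0..<N}" using b by (auto simp: bij_betw_def)
  have T: "?T \<in> carrier_mat N N" by (simp add: pmat_def)
  have AT: "?A * ?T = 1\<^sub>m N" by (rule pm_AT[OF f inj])
  have bg: "bij_betw (inv_into {0..<N} f) {0..<N} {0..<N}" by (rule bij_betw_inv_into[OF b])
  have TA: "?T * ?A = 1\<^sub>m N"
  proof -
    have "?T * ?A = pmat N (inv_into {0..<N} f) * transpose_mat (pmat N (inv_into {0..<N} f))"
      using pm_transpose[OF b] by (metis Matrix.transpose_transpose)
    also have "\<dots> = 1\<^sub>m N"
      using bg by (intro pm_AT) (auto simp: bij_betw_def)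
    finally show ?thesis .
  qed
  have U: "?A \<in> Units (ring_mat TYPE(complex) N b)" for b :: unit
    using AT TA T pm_carrier unfolding Units_def ring_mat_def by auto
  have "mat_inverse ?A \<noteq> None"
  proof
    assume "mat_inverse ?A = None"
    then have "?A \<notin> Units (ring_mat TYPE(complex) N ())" by (rule mat_inverse(1)[OF pm_carrier])
    with U show False by blast
  qed
  then obtain B where B: "mat_inverse ?A = Some B" by auto
  from mat_inverse(2)[OF pm_carrier B] have BA: "B * ?A = 1\<^sub>m N" and Bc: "B \<in> carrier_mat N N" by auto
  have "B = B * (?A * ?T)" using AT Bc by simp
  also have "\<dots> = (B * ?A) * ?T" by (rule assoc_mult_mat[OF Bc pm_carrier T, symmetric])
  also have "\<dots> = ?T" using BA T by simp
  finally show ?thesis using B by simp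
qed




lemma unlex_facts:
  shows unlex_bij: "bij_betw (unlex ns) {0..<prod_list ns} (Zcarrier ns)"
    and unlex_in: "a < prod_list ns \<Longrightarrow> unlex ns a \<in> Zcarrier ns"
    and lex_unlex: "a < prod_list ns \<Longrightarrow> lex_idx ns (unlex ns a) = a"
    and unlex_lex: "x \<in> Zcarrier ns \<Longrightarrow> unlex ns (lex_idx ns x) = x"
    and lex_lt: "x \<in> Zcarrier ns \<Longrightarrow> lex_idx ns x < prod_list ns"
proof -
  note b = lex_bij[of ns]
  show "bij_betw (unlex ns) {0..<prod_list ns} (Zcarrier ns)"
    unfolding unlex_def by (rule bij_betw_inv_into[OF b])
  then show "a < prod_list ns \<Longrightarrow> unlex ns a \<in> Zcarrier ns" by (auto simp: bij_betw_def)
  show "a < prod_list ns \<Longrightarrow> lex_idx ns (unlex ns a) = a"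
    unfolding unlex_def using bij_betw_inv_into_right[OF b] by simp
  show "x \<in> Zcarrier ns \<Longrightarrow> unlex ns (lex_idx ns x) = x"
    unfolding unlex_def using bij_betw_inv_into_left[OF b] by simp
  show "x \<in> Zcarrier ns \<Longrightarrow> lex_idx ns x < prod_list ns"
    using b by (auto simp: bij_betw_def)
qed

lemma pmat_cong: "(\<And>i. i < N \<Longrightarrow> f i = g i) \<Longrightarrow> pmat N f = pmat N g"
  by (intro eq_matI) (auto simp: pmat_def)

lemma mat_eq_iff_loc: "(Matrix.mat N M f = Matrix.mat N M g) \<longleftrightarrow> (\<forall>i<N. \<forall>j<M. f (i,j) = g (i,j))"
proof
  assume "Matrix.mat N M f = Matrix.mat N M g"
  then show "\<forall>i<N. \<forall>j<M. f (i,j) = g (i,j)" by (metis index_mat(1))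
qed (intro eq_matI, auto)

lemma pmo: "prod_list ms = N \<Longrightarrow> prod_list ns = N \<Longrightarrow>
   perm_mat_of ms ns \<sigma> = pmat N (\<lambda>a. lex_idx ns (\<sigma> (unlex ms a)))"
  by (simp add: perm_mat_of_def pmat_def)

lemma f_bij:
  assumes "prod_list ms = N" "prod_list ns = N" "bij_betw \<sigma> (Zcarrier ms) (Zcarrier ns)"
  shows "bij_betw (\<lambda>a. lex_idx ns (\<sigma> (unlex ms a))) {0..<N} {0..<N}"
proof -
  have "bij_betw (lex_idx ns \<circ> \<sigma> \<circ> unlex ms) {0..<N} {0..<N}"
    using unlex_bij[of ms] assms lex_bij[of ns]
    by (metis bij_betw_trans)
  then show ?thesis by (simp add: o_def)
qed

lemma M2a:
  assumes N: "prod_list ms = N" "prod_list ns = N" and b: "bij_betw \<sigma> (Zcarrier ms) (Zcarrier ns)"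
  shows "is_perm_mat N (perm_mat_of ms ns \<sigma>)"
proof -
  define f where "f = (\<lambda>a. lex_idx ns (\<sigma> (unlex ms a)))"
  define \<pi> where "\<pi> = (\<lambda>a. if a < N then f a else a)"
  have fb: "bij_betw f {0..<N} {0..<N}" using f_bij[OF N b] by (simp add: f_def)
  have "bij_betw \<pi> {0..<N} {0..<N}"
    using fb by (rule bij_betw_cong[THEN iffD1, rotated]) (auto simp: \<pi>_def)
  then have perm: "\<pi> permutes {0..<N}" by (rule bij_imp_permutes) (auto simp: \<pi>_def)
  have "perm_mat_of ms ns \<sigma> = pmat N \<pi>"
    unfolding pmo[OF N] f_def[symmetric] by (rule pmat_cong) (simp add: \<pi>_def)
  then show ?thesis unfolding is_perm_mat_def pmat_def using perm by blast
qed

lemma M2b: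
  assumes N: "prod_list ms = N" "prod_list ns = N" and P: "is_perm_mat N P"
  shows "\<exists>\<sigma>. bij_betw \<sigma> (Zcarrier ms) (Zcarrier ns) \<and> P = perm_mat_of ms ns \<sigma>"
proof -
  from P obtain \<pi> where perm: "\<pi> permutes {0..<N}" and P: "P = pmat N \<pi>"
    unfolding is_perm_mat_def pmat_def by blast
  define \<sigma> where "\<sigma> = (\<lambda>x. unlex ns (\<pi> (lex_idx ms x)))"
  have pb: "bij_betw \<pi> {0..<N} {0..<N}" by (rule permutes_imp_bij[OF perm])
  have "bij_betw (unlex ns \<circ> \<pi> \<circ> lex_idx ms) (Zcarrier ms) (Zcarrier ns)"
    using lex_bij[of ms] pb unlex_bij[of ns] N by (metis bij_betw_trans)
  then have sb: "bij_betw \<sigma> (Zcarrier ms) (Zcarrier ns)" by (simp add: \<sigma>_def o_def)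
  have "perm_mat_of ms ns \<sigma> = pmat N \<pi>"
    unfolding pmo[OF N]
  proof (rule pmat_cong)
    fix i assume i: "i < N"
    then have "\<pi> i < N" using pb by (auto simp: bij_betw_def)
    then show "lex_idx ns (\<sigma> (unlex ms i)) = \<pi> i"
      using i N by (simp add: \<sigma>_def lex_unlex)
  qed
  then show ?thesis using sb P by auto
qed

definition Good :: "nat list \<Rightarrow> nat list \<Rightarrow> (nat list \<Rightarrow> nat list) \<Rightarrow> (nat list \<Rightarrow> nat list) \<Rightarrow> bool" where
  "Good ns ms \<sigma> \<tau> = (\<forall>a\<in>Zcarrier ms. \<forall>b\<in>Zcarrier ms. fourier_entry ns (\<sigma> a) (\<tau> b) = fourier_entry ms a b)"

lemma Good_swap: "Good ns ms \<sigma> \<tau> \<Longrightarrow> Good ns ms \<tau> \<sigma>"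
  unfolding Good_def by (metis fe_sym)

lemma M1:
  assumes N: "prod_list ms = N" "prod_list ns = N"
    and bs: "bij_betw \<sigma> (Zcarrier ms) (Zcarrier ns)" and bt: "bij_betw \<tau> (Zcarrier ms) (Zcarrier ns)"
  shows "(perm_mat_of ms ns \<sigma>, perm_mat_of ms ns \<tau>) \<in> Map_set N (fourier_mat ns) (fourier_mat ms)
     \<longleftrightarrow> Good ns ms \<sigma> \<tau>"
proof -
  define fs where "fs = (\<lambda>a. lex_idx ns (\<sigma> (unlex ms a)))"
  define ft where "ft = (\<lambda>a. lex_idx ns (\<tau> (unlex ms a)))"
  have fsb: "bij_betw fs {0..<N} {0..<N}" using f_bij[OF N bs] by (simp add: fs_def)
  have ftb: "bij_betw ft {0..<N} {0..<N}" using f_bij[OF N bt] by (simp add: ft_def)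
  have fs_lt: "\<forall>i<N. fs i < N" using fsb by (auto simp: bij_betw_def)
  have ft_lt: "\<forall>i<N. ft i < N" using ftb by (auto simp: bij_betw_def)
  have P: "perm_mat_of ms ns \<sigma> = pmat N fs" using pmo[OF N] by (simp add: fs_def)
  have R: "perm_mat_of ms ns \<tau> = pmat N ft" using pmo[OF N] by (simp add: ft_def)
  have F: "fourier_mat ns = Matrix.mat N N (\<lambda>(a,b). fourier_entry ns (unlex ns a) (unlex ns b))"
    using N by (simp add: fourier_mat_def)
  have G: "fourier_mat ms = Matrix.mat N N (\<lambda>(a,b). fourier_entry ms (unlex ms a) (unlex ms b))"
    using N by (simp add: fourier_mat_def)
  have Fc: "fourier_mat ns \<in> carrier_mat N N" using F by simp
  have PF: "pmat N fs * fourier_mat ns = Matrix.mat N N (\<lambda>(i,j). fourier_mat ns $$ (fs i, j))"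
    by (rule pm_left[OF fs_lt Fc])
  have PFc: "pmat N fs * fourier_mat ns \<in> carrier_mat N N" using PF by simp
  have PFR: "pmat N fs * fourier_mat ns * transpose_mat (pmat N ft)
     = Matrix.mat N N (\<lambda>(i,j). fourier_entry ns (\<sigma> (unlex ms i)) (\<tau> (unlex ms j)))"
  proof -
    have "pmat N fs * fourier_mat ns * transpose_mat (pmat N ft)
       = Matrix.mat N N (\<lambda>(i,j). (pmat N fs * fourier_mat ns) $$ (i, ft j))"
      by (rule pm_right[OF ft_lt PFc])
    also have "\<dots> = Matrix.mat N N (\<lambda>(i,j). fourier_entry ns (\<sigma> (unlex ms i)) (\<tau> (unlex ms j)))"
    proof (rule eq_matI)
      fix i j assume "i < dim_row (Matrix.mat N N (\<lambda>(i,j). fourier_entry ns (\<sigma> (unlex ms i)) (\<tau> (unlex ms j))))"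
        "j < dim_col (Matrix.mat N N (\<lambda>(i,j). fourier_entry ns (\<sigma> (unlex ms i)) (\<tau> (unlex ms j))))"
      then have ij: "i < N" "j < N" by auto
      have s: "\<sigma> (unlex ms i) \<in> Zcarrier ns" using bs unlex_in[of i ms] ij N by (auto simp: bij_betw_def)
      have t: "\<tau> (unlex ms j) \<in> Zcarrier ns" using bt unlex_in[of j ms] ij N by (auto simp: bij_betw_def)
      have "Matrix.mat N N (\<lambda>(i,j). (pmat N fs * fourier_mat ns) $$ (i, ft j)) $$ (i,j)
          = fourier_mat ns $$ (fs i, ft j)" using ij ft_lt PF by simp
      also have "\<dots> = fourier_entry ns (unlex ns (fs i)) (unlex ns (ft j))"
        using ij fs_lt ft_lt F by simp
      also have "\<dots> = fourier_entry ns (\<sigma> (unlex ms i)) (\<tau> (unlex ms j))"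
        using s t by (simp add: fs_def ft_def unlex_lex)
      finally show "Matrix.mat N N (\<lambda>(i,j). (pmat N fs * fourier_mat ns) $$ (i, ft j)) $$ (i,j)
          = Matrix.mat N N (\<lambda>(i,j). fourier_entry ns (\<sigma> (unlex ms i)) (\<tau> (unlex ms j))) $$ (i,j)"
        using ij by simp
    qed auto
    finally show ?thesis .
  qed
  have inv: "mat_inverse (pmat N ft) = Some (transpose_mat (pmat N ft))" by (rule pm_inv[OF ftb])
  have "(perm_mat_of ms ns \<sigma>, perm_mat_of ms ns \<tau>) \<in> Map_set N (fourier_mat ns) (fourier_mat ms)
     \<longleftrightarrow> pmat N fs * fourier_mat ns * transpose_mat (pmat N ft) = fourier_mat ms"
    using M2a[OF N bs] M2a[OF N bt] inv P R by (simp add: Map_set_def)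
  also have "\<dots> \<longleftrightarrow> (\<forall>i<N. \<forall>j<N. fourier_entry ns (\<sigma> (unlex ms i)) (\<tau> (unlex ms j))
                        = fourier_entry ms (unlex ms i) (unlex ms j))"
    unfolding PFR G mat_eq_iff_loc by simp
  also have "\<dots> \<longleftrightarrow> Good ns ms \<sigma> \<tau>"
  proof
    assume H: "\<forall>i<N. \<forall>j<N. fourier_entry ns (\<sigma> (unlex ms i)) (\<tau> (unlex ms j))
                        = fourier_entry ms (unlex ms i) (unlex ms j)"
    show "Good ns ms \<sigma> \<tau>" unfolding Good_def
    proof (intro ballI)
      fix a b assume a: "a \<in> Zcarrier ms" and b: "b \<in> Zcarrier ms"
      from H[rule_format, of "lex_idx ms a" "lex_idx ms b"] show "fourier_entry ns (\<sigma> a) (\<tau> b) = fourier_entry ms a b"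
        using a b N lex_lt[of a ms] lex_lt[of b ms] by (simp add: unlex_lex)
    qed
  next
    assume "Good ns ms \<sigma> \<tau>"
    then show "\<forall>i<N. \<forall>j<N. fourier_entry ns (\<sigma> (unlex ms i)) (\<tau> (unlex ms j))
                        = fourier_entry ms (unlex ms i) (unlex ms j)"
      using N unlex_in[of _ ms] by (simp add: Good_def)
  qed
  finally show ?thesis .
qed




definition HPr :: "nat list \<Rightarrow> nat list \<Rightarrow> (nat list \<Rightarrow> nat list) \<Rightarrow> (nat list \<Rightarrow> nat list) \<Rightarrow> bool" where
  "HPr ns ms chi h = (h \<in> extensional (Zcarrier ns) \<and> bij_betw h (Zcarrier ns) (Zcarrier ms) \<and>
      (\<forall>i\<in>Zcarrier ms. \<forall>j\<in>Zcarrier ns. fourier_entry ns (chi i) j = fourier_entry ms i (h j)))"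

lemma hFG_eq:
  assumes pm: "pos ms" and H: "HPr ns ms chi h"
  shows "hFG ns ms chi = h"
proof -
  have "hFG ns ms chi = (THE h. HPr ns ms chi h)" unfolding hFG_def HPr_def by (rule refl)
  also have "\<dots> = h"
  proof (rule the_equality[of "HPr ns ms chi" h])
  show "HPr ns ms chi h" by (rule H)
  fix h' assume H': "HPr ns ms chi h'"
  show "h' = h"
  proof
    fix x show "h' x = h x"
    proof (cases "x \<in> Zcarrier ns")
      case True
      have b1: "bij_betw h' (Zcarrier ns) (Zcarrier ms)" "bij_betw h (Zcarrier ns) (Zcarrier ms)"
        using H H' by (simp_all add: HPr_def)
      have in1: "h' x \<in> Zcarrier ms" "h x \<in> Zcarrier ms"
        using bij_betw_apply[OF b1(1) True] bij_betw_apply[OF b1(2) True] by auto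
      have "\<forall>k\<in>Zcarrier ms. fourier_entry ms (h' x) k = fourier_entry ms (h x) k"
      proof
        fix k assume k: "k \<in> Zcarrier ms"
        have P1: "\<forall>i\<in>Zcarrier ms. \<forall>j\<in>Zcarrier ns. fourier_entry ns (chi i) j = fourier_entry ms i (h j)"
          using H by (simp add: HPr_def)
        have P2: "\<forall>i\<in>Zcarrier ms. \<forall>j\<in>Zcarrier ns. fourier_entry ns (chi i) j = fourier_entry ms i (h' j)"
          using H' by (simp add: HPr_def)
        have "fourier_entry ms (h' x) k = fourier_entry ms k (h' x)" by (rule fe_sym)
        also have "\<dots> = fourier_entry ns (chi k) x" by (rule P2[rule_format, OF k True, symmetric])
        also have "\<dots> = fourier_entry ms k (h x)" by (rule P1[rule_format, OF k True])
        also have "\<dots> = fourier_entry ms (h x) k" by (rule fe_sym)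
        finally show "fourier_entry ms (h' x) k = fourier_entry ms (h x) k" .
      qed
      then show ?thesis by (rule fe_nondeg[OF pm in1])
    next
      case False
      have e: "h \<in> extensional (Zcarrier ns)" "h' \<in> extensional (Zcarrier ns)"
        using H H' by (simp_all add: HPr_def)
      show ?thesis using extensional_arb[OF e(1) False] extensional_arb[OF e(2) False] by simp
    qed
  qed
  qed
  finally show ?thesis .
qed

lemma card_Z: "card (Zcarrier ns) = prod_list ns"
  using bij_betw_same_card[OF lex_bij[of ns]] by simp

lemma finite_Z: "finite (Zcarrier ns)"
  using bij_betw_finite[OF lex_bij[of ns]] by simp

lemma HPr_ex:
  assumes pn: "pos ns" and pm: "pos ms" and N: "prod_list ns = prod_list ms"
    and iso: "chi \<in> iso (Zgrp ms) (Zgrp ns)"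
  shows "\<exists>h. HPr ns ms chi h"
proof -
  have cb: "bij_betw chi (Zcarrier ms) (Zcarrier ns)" using iso by (simp add: iso_def Zgrp_carrier)
  have hom: "\<And>a b. a \<in> Zcarrier ms \<Longrightarrow> b \<in> Zcarrier ms \<Longrightarrow> chi (zm ms a b) = zm ns (chi a) (chi b)"
    using iso by (simp add: iso_def hom_def Zgrp_carrier Zgrp_mult)
  have "\<exists>k\<in>Zcarrier ms. \<forall>i\<in>Zcarrier ms. fourier_entry ns (chi i) j = fourier_entry ms i k"
    if j: "j \<in> Zcarrier ns" for j
  proof (rule char_surj[OF pm])
    fix a b assume "a \<in> Zcarrier ms" "b \<in> Zcarrier ms"
    then show "fourier_entry ns (chi (zm ms a b)) j = fourier_entry ns (chi a) j * fourier_entry ns (chi b) j"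
      using hom fe_mult[OF pn] by simp
  qed (rule fe_nz)
  then have "\<forall>j\<in>Zcarrier ns. \<exists>k. k \<in> Zcarrier ms \<and>
      (\<forall>i\<in>Zcarrier ms. fourier_entry ns (chi i) j = fourier_entry ms i k)" by blast
  from bchoice[OF this] obtain hk where hk0: "\<forall>j\<in>Zcarrier ns. hk j \<in> Zcarrier ms \<and>
      (\<forall>i\<in>Zcarrier ms. fourier_entry ns (chi i) j = fourier_entry ms i (hk j))" by blast
  then have hk: "\<And>j. j \<in> Zcarrier ns \<Longrightarrow> hk j \<in> Zcarrier ms \<and>
      (\<forall>i\<in>Zcarrier ms. fourier_entry ns (chi i) j = fourier_entry ms i (hk j))" by blast
  define h where "h = restrict hk (Zcarrier ns)"
  have hprop: "\<forall>i\<in>Zcarrier ms. \<forall>j\<in>Zcarrier ns. fourier_entry ns (chi i) j = fourier_entry ms i (h j)"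
    using hk by (simp add: h_def)
  have inj: "inj_on h (Zcarrier ns)"
  proof (rule inj_onI)
    fix j j' assume j: "j \<in> Zcarrier ns" and j': "j' \<in> Zcarrier ns" and eq: "h j = h j'"
    have "\<forall>x\<in>Zcarrier ns. fourier_entry ns j x = fourier_entry ns j' x"
    proof
      fix x assume x: "x \<in> Zcarrier ns"
      then obtain i where i: "i \<in> Zcarrier ms" "x = chi i" using cb by (auto simp: bij_betw_def)
      have "fourier_entry ns j x = fourier_entry ns (chi i) j" unfolding i(2) by (rule fe_sym)
      also have "\<dots> = fourier_entry ns (chi i) j'" using hprop i j j' eq by simp
      also have "\<dots> = fourier_entry ns j' x" unfolding i(2) by (rule fe_sym)
      finally show "fourier_entry ns j x = fourier_entry ns j' x" .
    qed
    then show "j = j'" by (rule fe_nondeg[OF pn j j'])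
  qed
  have sub: "h ` Zcarrier ns \<subseteq> Zcarrier ms" using hk by (auto simp: h_def)
  have "card (h ` Zcarrier ns) = card (Zcarrier ms)"
    using card_image[OF inj] card_Z[of ns] card_Z[of ms] N by simp
  then have "h ` Zcarrier ns = Zcarrier ms" using card_subset_eq[OF finite_Z sub] by simp
  then have "bij_betw h (Zcarrier ns) (Zcarrier ms)" using inj by (simp add: bij_betw_def)
  moreover have "h \<in> extensional (Zcarrier ns)" by (simp add: h_def)
  ultimately show ?thesis using hprop unfolding HPr_def by blast
qed

lemma G3:
  assumes pn: "pos ns" and pm: "pos ms" and N: "prod_list ns = prod_list ms"
    and iso: "chi \<in> iso (Zgrp ms) (Zgrp ns)"
  shows "bij_betw chi (Zcarrier ms) (Zcarrier ns)"
    "bij_betw (inv_into (Zcarrier ns) (hFG ns ms chi)) (Zcarrier ms) (Zcarrier ns)"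
    "Good ns ms chi (inv_into (Zcarrier ns) (hFG ns ms chi))"
proof -
  show "bij_betw chi (Zcarrier ms) (Zcarrier ns)" using iso by (simp add: iso_def Zgrp_carrier)
  obtain h where H: "HPr ns ms chi h" using HPr_ex[OF pn pm N iso] by blast
  have eq: "hFG ns ms chi = h" by (rule hFG_eq[OF pm H])
  have hb: "bij_betw h (Zcarrier ns) (Zcarrier ms)" using H by (simp add: HPr_def)
  show "bij_betw (inv_into (Zcarrier ns) (hFG ns ms chi)) (Zcarrier ms) (Zcarrier ns)"
    unfolding eq by (rule bij_betw_inv_into[OF hb])
  show "Good ns ms chi (inv_into (Zcarrier ns) (hFG ns ms chi))"
    unfolding Good_def eq
  proof (intro ballI)
    fix a b assume a: "a \<in> Zcarrier ms" and b: "b \<in> Zcarrier ms"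
    have t: "inv_into (Zcarrier ns) h b \<in> Zcarrier ns" using bij_betw_inv_into[OF hb] b by (auto simp: bij_betw_def)
    have "h (inv_into (Zcarrier ns) h b) = b" using bij_betw_inv_into_right[OF hb b] .
    then show "fourier_entry ns (chi a) (inv_into (Zcarrier ns) h b) = fourier_entry ms a b"
    proof -
      have P1: "\<forall>i\<in>Zcarrier ms. \<forall>j\<in>Zcarrier ns. fourier_entry ns (chi i) j = fourier_entry ms i (h j)"
        using H by (simp add: HPr_def)
      then have "fourier_entry ns (chi a) (inv_into (Zcarrier ns) h b) = fourier_entry ms a (h (inv_into (Zcarrier ns) h b))"
        using a t by simp
      then show ?thesis using \<open>h (inv_into (Zcarrier ns) h b) = b\<close> by simp
    qed
  qed
qed

lemma G2:
  assumes pn: "pos ns" and pm: "pos ms"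
    and bs: "bij_betw \<sigma> (Zcarrier ms) (Zcarrier ns)" and bt: "bij_betw \<tau> (Zcarrier ms) (Zcarrier ns)"
    and good: "Good ns ms \<sigma> \<tau>"
  shows "\<sigma> \<in> iso (Zgrp ms) (Zgrp ns)" "\<forall>b\<in>Zcarrier ms. inv_into (Zcarrier ns) (hFG ns ms \<sigma>) b = \<tau> b"
proof -
  have homp: "\<sigma> (zm ms a b) = zm ns (\<sigma> a) (\<sigma> b)" if a: "a \<in> Zcarrier ms" and b: "b \<in> Zcarrier ms" for a b
  proof (rule fe_nondeg[OF pn])
    show "\<sigma> (zm ms a b) \<in> Zcarrier ns" using bs zm_closed[OF pm] by (auto simp: bij_betw_def)
    show "zm ns (\<sigma> a) (\<sigma> b) \<in> Zcarrier ns" by (rule zm_closed[OF pn])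
    show "\<forall>k\<in>Zcarrier ns. fourier_entry ns (\<sigma> (zm ms a b)) k = fourier_entry ns (zm ns (\<sigma> a) (\<sigma> b)) k"
    proof
      fix k assume "k \<in> Zcarrier ns"
      then obtain c where c: "c \<in> Zcarrier ms" "k = \<tau> c" using bt by (auto simp: bij_betw_def)
      have "fourier_entry ns (\<sigma> (zm ms a b)) (\<tau> c) = fourier_entry ms (zm ms a b) c"
        using good c zm_closed[OF pm] by (simp add: Good_def)
      also have "\<dots> = fourier_entry ms a c * fourier_entry ms b c" by (rule fe_mult[OF pm])
      also have "\<dots> = fourier_entry ns (\<sigma> a) (\<tau> c) * fourier_entry ns (\<sigma> b) (\<tau> c)"
        using good a b c by (simp add: Good_def)
      also have "\<dots> = fourier_entry ns (zm ns (\<sigma> a) (\<sigma> b)) (\<tau> c)" by (rule fe_mult[OF pn, symmetric])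
      finally show "fourier_entry ns (\<sigma> (zm ms a b)) k = fourier_entry ns (zm ns (\<sigma> a) (\<sigma> b)) k"
        using c by simp
    qed
  qed
  show "\<sigma> \<in> iso (Zgrp ms) (Zgrp ns)"
    using bs homp by (auto simp: iso_def hom_def Zgrp_carrier Zgrp_mult bij_betw_def)
  define h0 where "h0 = restrict (inv_into (Zcarrier ms) \<tau>) (Zcarrier ns)"
  have hb0: "bij_betw (inv_into (Zcarrier ms) \<tau>) (Zcarrier ns) (Zcarrier ms)" by (rule bij_betw_inv_into[OF bt])
  have hb: "bij_betw h0 (Zcarrier ns) (Zcarrier ms)"
    using hb0 by (rule bij_betw_cong[THEN iffD1, rotated]) (simp add: h0_def)
  have H: "HPr ns ms \<sigma> h0" unfolding HPr_def
  proof (intro conjI ballI)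
    show "h0 \<in> extensional (Zcarrier ns)" by (simp add: h0_def)
    show "bij_betw h0 (Zcarrier ns) (Zcarrier ms)" by (rule hb)
    fix i j assume i: "i \<in> Zcarrier ms" and j: "j \<in> Zcarrier ns"
    have hj: "h0 j \<in> Zcarrier ms" using hb j by (auto simp: bij_betw_def)
    have "\<tau> (h0 j) = j" using j bij_betw_inv_into_right[OF bt j] by (simp add: h0_def)
    then show "fourier_entry ns (\<sigma> i) j = fourier_entry ms i (h0 j)"
    proof -
      have "fourier_entry ns (\<sigma> i) (\<tau> (h0 j)) = fourier_entry ms i (h0 j)" using good i hj by (simp add: Good_def)
      then show ?thesis using \<open>\<tau> (h0 j) = j\<close> by simp
    qed
  qed
  have eq: "hFG ns ms \<sigma> = h0" by (rule hFG_eq[OF pm H])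
  show "\<forall>b\<in>Zcarrier ms. inv_into (Zcarrier ns) (hFG ns ms \<sigma>) b = \<tau> b"
  proof
    fix b assume b: "b \<in> Zcarrier ms"
    have tb: "\<tau> b \<in> Zcarrier ns" using bt b by (auto simp: bij_betw_def)
    have "h0 (\<tau> b) = b" using tb bij_betw_inv_into_left[OF bt b] by (simp add: h0_def)
    then have "inv_into (Zcarrier ns) h0 b = inv_into (Zcarrier ns) h0 (h0 (\<tau> b))" by simp
    also have "\<dots> = \<tau> b" using bij_betw_inv_into_left[OF hb tb] .
    finally show "inv_into (Zcarrier ns) (hFG ns ms \<sigma>) b = \<tau> b" using eq by simp
  qed
qed




lemma perm_mat_cong:
  assumes "\<forall>a\<in>Zcarrier ms. f a = g a"
  shows "perm_mat_of ms ns f = perm_mat_of ms ns g"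
  unfolding perm_mat_of_def using assms unlex_in[of _ ms] by (intro eq_matI) auto

lemma MapAB:
  assumes pn: "pos ns" and pm: "pos ms" and N: "prod_list ns = prod_list ms"
  shows "Map_set (prod_list ns) (fourier_mat ns) (fourier_mat ms) =
           {(perm_mat_of ms ns chi, perm_mat_of ms ns (inv_into (Zcarrier ns) (hFG ns ms chi))) | chi.
              chi \<in> iso (Zgrp ms) (Zgrp ns)}"
    "Map_set (prod_list ns) (fourier_mat ns) (fourier_mat ms) =
           {(perm_mat_of ms ns (inv_into (Zcarrier ns) (hFG ns ms chi)), perm_mat_of ms ns chi) | chi.
              chi \<in> iso (Zgrp ms) (Zgrp ns)}"
proof -
  let ?N = "prod_list ns"
  have NN: "prod_list ms = ?N" "prod_list ns = ?N" using N by auto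
  have dec: "\<exists>\<sigma> \<tau>. bij_betw \<sigma> (Zcarrier ms) (Zcarrier ns) \<and> bij_betw \<tau> (Zcarrier ms) (Zcarrier ns)
     \<and> x = (perm_mat_of ms ns \<sigma>, perm_mat_of ms ns \<tau>) \<and> Good ns ms \<sigma> \<tau>"
    if x: "x \<in> Map_set ?N (fourier_mat ns) (fourier_mat ms)" for x
  proof -
    obtain P R where PR: "x = (P, R)" by (cases x)
    have "is_perm_mat ?N P" "is_perm_mat ?N R" using x PR by (auto simp: Map_set_def)
    then obtain \<sigma> \<tau> where s: "bij_betw \<sigma> (Zcarrier ms) (Zcarrier ns)" "P = perm_mat_of ms ns \<sigma>"
      and t: "bij_betw \<tau> (Zcarrier ms) (Zcarrier ns)" "R = perm_mat_of ms ns \<tau>"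
      using M2b[OF NN] by metis
    have "Good ns ms \<sigma> \<tau>" using M1[OF NN s(1) t(1)] x PR s t by simp
    then show ?thesis using s t PR by blast
  qed
  show "Map_set ?N (fourier_mat ns) (fourier_mat ms) =
           {(perm_mat_of ms ns chi, perm_mat_of ms ns (inv_into (Zcarrier ns) (hFG ns ms chi))) | chi.
              chi \<in> iso (Zgrp ms) (Zgrp ns)}"
  proof (intro equalityI subsetI)
    fix x assume "x \<in> Map_set ?N (fourier_mat ns) (fourier_mat ms)"
    then obtain \<sigma> \<tau> where st: "bij_betw \<sigma> (Zcarrier ms) (Zcarrier ns)" "bij_betw \<tau> (Zcarrier ms) (Zcarrier ns)"
      "x = (perm_mat_of ms ns \<sigma>, perm_mat_of ms ns \<tau>)" "Good ns ms \<sigma> \<tau>" using dec by blast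
    note g = G2[OF pn pm st(1) st(2) st(4)]
    have "perm_mat_of ms ns \<tau> = perm_mat_of ms ns (inv_into (Zcarrier ns) (hFG ns ms \<sigma>))"
      using g(2) by (intro perm_mat_cong) simp
    then show "x \<in> {(perm_mat_of ms ns chi, perm_mat_of ms ns (inv_into (Zcarrier ns) (hFG ns ms chi))) | chi.
              chi \<in> iso (Zgrp ms) (Zgrp ns)}" using g(1) st(3) by blast
  next
    fix x assume "x \<in> {(perm_mat_of ms ns chi, perm_mat_of ms ns (inv_into (Zcarrier ns) (hFG ns ms chi))) | chi.
              chi \<in> iso (Zgrp ms) (Zgrp ns)}"
    then obtain chi where x: "x = (perm_mat_of ms ns chi, perm_mat_of ms ns (inv_into (Zcarrier ns) (hFG ns ms chi)))"
      and iso: "chi \<in> iso (Zgrp ms) (Zgrp ns)" by blast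
    note g = G3[OF pn pm N iso]
    show "x \<in> Map_set ?N (fourier_mat ns) (fourier_mat ms)"
      using M1[OF NN g(1) g(2)] g(3) x by simp
  qed
  show "Map_set ?N (fourier_mat ns) (fourier_mat ms) =
           {(perm_mat_of ms ns (inv_into (Zcarrier ns) (hFG ns ms chi)), perm_mat_of ms ns chi) | chi.
              chi \<in> iso (Zgrp ms) (Zgrp ns)}"
  proof (intro equalityI subsetI)
    fix x assume "x \<in> Map_set ?N (fourier_mat ns) (fourier_mat ms)"
    then obtain \<sigma> \<tau> where st: "bij_betw \<sigma> (Zcarrier ms) (Zcarrier ns)" "bij_betw \<tau> (Zcarrier ms) (Zcarrier ns)"
      "x = (perm_mat_of ms ns \<sigma>, perm_mat_of ms ns \<tau>)" "Good ns ms \<sigma> \<tau>" using dec by blast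
    note g = G2[OF pn pm st(2) st(1) Good_swap[OF st(4)]]
    have "perm_mat_of ms ns \<sigma> = perm_mat_of ms ns (inv_into (Zcarrier ns) (hFG ns ms \<tau>))"
      using g(2) by (intro perm_mat_cong) simp
    then show "x \<in> {(perm_mat_of ms ns (inv_into (Zcarrier ns) (hFG ns ms chi)), perm_mat_of ms ns chi) | chi.
              chi \<in> iso (Zgrp ms) (Zgrp ns)}" using g(1) st(3) by blast
  next
    fix x assume "x \<in> {(perm_mat_of ms ns (inv_into (Zcarrier ns) (hFG ns ms chi)), perm_mat_of ms ns chi) | chi.
              chi \<in> iso (Zgrp ms) (Zgrp ns)}"
    then obtain chi where x: "x = (perm_mat_of ms ns (inv_into (Zcarrier ns) (hFG ns ms chi)), perm_mat_of ms ns chi)"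
      and iso: "chi \<in> iso (Zgrp ms) (Zgrp ns)" by blast
    note g = G3[OF pn pm N iso]
    show "x \<in> Map_set ?N (fourier_mat ns) (fourier_mat ms)"
      using M1[OF NN g(2) g(1)] Good_swap[OF g(3)] x by simp
  qed
qed

lemma pos_of: "\<forall>n\<in>set ns. 1 \<le> n \<Longrightarrow> pos ns"
  unfolding pos_def by (metis One_nat_def Suc_le_eq nth_mem)

theorem corollary4p8:
  fixes ns ms :: "nat list"
  assumes "\<forall>n\<in>set ns. 1 \<le> n" and "\<forall>m\<in>set ms. 1 \<le> m"
    and "prod_list ns = prod_list ms"
  shows "Stab_set (prod_list ns) (fourier_mat ns) =
           {(perm_mat_of ns ns \<rho>, perm_mat_of ns ns (inv_into (Zcarrier ns) (hFG ns ns \<rho>))) | \<rho>.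
              \<rho> \<in> iso (Zgrp ns) (Zgrp ns)}
       \<and> Stab_set (prod_list ns) (fourier_mat ns) =
           {(perm_mat_of ns ns (inv_into (Zcarrier ns) (hFG ns ns \<rho>)), perm_mat_of ns ns \<rho>) | \<rho>.
              \<rho> \<in> iso (Zgrp ns) (Zgrp ns)}
       \<and> Map_set (prod_list ns) (fourier_mat ns) (fourier_mat ms) =
           {(perm_mat_of ms ns \<chi>, perm_mat_of ms ns (inv_into (Zcarrier ns) (hFG ns ms \<chi>))) | \<chi>.
              \<chi> \<in> iso (Zgrp ms) (Zgrp ns)}
       \<and> Map_set (prod_list ns) (fourier_mat ns) (fourier_mat ms) =
           {(perm_mat_of ms ns (inv_into (Zcarrier ns) (hFG ns ms \<chi>)), perm_mat_of ms ns \<chi>) | \<chi>.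
              \<chi> \<in> iso (Zgrp ms) (Zgrp ns)}"
proof -
  have pn: "pos ns" and pm: "pos ms" using assms pos_of by auto
  have S: "Stab_set (prod_list ns) (fourier_mat ns) = Map_set (prod_list ns) (fourier_mat ns) (fourier_mat ns)"
    by (simp add: Stab_set_def Map_set_def)
  show ?thesis using MapAB[OF pn pn refl] MapAB[OF pn pm assms(3)] unfolding S by simp
qed


end
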